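(* Let $H \le G$ be finite groups and let $[H,K]$ be the bottom interval of $[H,G]$. If $[H,K]$ is linearly primitive (i.e. there is an irreducible complex representation $U$ of $K$ with $K_{(U^H)} = H$), then $[H,G]$ is linearly primitive.
   Context: The interval $[H,G]$ is the lattice of subgroups $L$ with $H \le L \le G$ (meet = intersection, join = generated subgroup); its atoms are its minimal elements strictly above $H$, and its bottom interval is $[H,K]$ with $K$ the join of all atoms. For a group $L$ acting linearly on $V$, $M \le L$ and a subspace $X$: $V^M = \{v : mv = v \ \forall m \in M\}$ and $L_{(X)} = \{l \in L : lx = x \ \forall x \in X\}$. An interval $[H,G]$ of finite groups is linearly primitive if there is an irreducible complex representation $V$ of $G$ with $G_{(V^H)} = H$. *)

theory Defs
  imports "HOL-Algebra.Generated_Groups" "Jordan_Normal_Form.Matrix"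
begin

definition is_rep :: "('a, 'b) monoid_scheme \<Rightarrow> nat \<Rightarrow> ('a \<Rightarrow> complex mat) \<Rightarrow> bool" where
  "is_rep G n \<rho> \<longleftrightarrow>
     (\<forall>g \<in> carrier G. \<rho> g \<in> carrier_mat n n) \<and>
     \<rho> \<one>\<^bsub>G\<^esub> = 1\<^sub>m n \<and>
     (\<forall>g \<in> carrier G. \<forall>h \<in> carrier G. \<rho> (g \<otimes>\<^bsub>G\<^esub> h) = \<rho> g * \<rho> h)"

definition is_subspace :: "nat \<Rightarrow> complex vec set \<Rightarrow> bool" where
  "is_subspace n W \<longleftrightarrow> W \<subseteq> carrier_vec n \<and> 0\<^sub>v n \<in> W \<and>
     (\<forall>v \<in> W. \<forall>w \<in> W. v + w \<in> W) \<and> (\<forall>c. \<forall>v \<in> W. c \<cdot>\<^sub>v v \<in> W)"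

definition is_irred_rep :: "('a, 'b) monoid_scheme \<Rightarrow> nat \<Rightarrow> ('a \<Rightarrow> complex mat) \<Rightarrow> bool" where
  "is_irred_rep G n \<rho> \<longleftrightarrow> is_rep G n \<rho> \<and> n > 0 \<and>
     (\<forall>W. is_subspace n W \<and> (\<forall>g \<in> carrier G. \<forall>w \<in> W. \<rho> g *\<^sub>v w \<in> W)
          \<longrightarrow> W = {0\<^sub>v n} \<or> W = carrier_vec n)"

definition fixed_space :: "nat \<Rightarrow> ('a \<Rightarrow> complex mat) \<Rightarrow> 'a set \<Rightarrow> complex vec set" where
  "fixed_space n \<rho> M = {v \<in> carrier_vec n. \<forall>m \<in> M. \<rho> m *\<^sub>v v = v}"

definition pointwise_stab :: "('a, 'b) monoid_scheme \<Rightarrow> ('a \<Rightarrow> complex mat) \<Rightarrow> complex vec set \<Rightarrow> 'a set" where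
  "pointwise_stab L \<rho> X = {l \<in> carrier L. \<forall>x \<in> X. \<rho> l *\<^sub>v x = x}"

definition lin_primitive :: "('a, 'b) monoid_scheme \<Rightarrow> 'a set \<Rightarrow> bool" where
  "lin_primitive G H \<longleftrightarrow>
     (\<exists>n \<rho>. is_irred_rep G n \<rho> \<and> pointwise_stab G \<rho> (fixed_space n \<rho> H) = H)"

definition interval_atoms :: "('a, 'b) monoid_scheme \<Rightarrow> 'a set \<Rightarrow> 'a set set" where
  "interval_atoms G H = {L. subgroup L G \<and> H \<subset> L \<and>
      \<not> (\<exists>M. subgroup M G \<and> H \<subset> M \<and> M \<subset> L)}"

text \<open>Top of the bottom interval: the join (in [H,G]) of all atoms.\<close>
definition bottom_top :: "('a, 'b) monoid_scheme \<Rightarrow> 'a set \<Rightarrow> 'a set" where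
  "bottom_top G H = generate G (H \<union> \<Union>(interval_atoms G H))"

end

theory Submission
  imports Defs "Jordan_Normal_Form.DL_Rank"
begin


definition adj :: "complex mat \<Rightarrow> complex mat" where
  "adj A = mat (dim_col A) (dim_row A) (\<lambda>(i,j). cnj (A $$ (j,i)))"

definition ip :: "complex vec \<Rightarrow> complex vec \<Rightarrow> complex" where
  "ip x y = (\<Sum>i<dim_vec y. x $ i * cnj (y $ i))"

lemma mat_mult_zero_vec[simp]: "A \<in> carrier_mat a b \<Longrightarrow> A *\<^sub>v 0\<^sub>v b = 0\<^sub>v a"
  by (rule eq_vecI) (auto simp: scalar_prod_def)

lemma adj_carrier[simp]: "A \<in> carrier_mat a b \<Longrightarrow> adj A \<in> carrier_mat b a"
  unfolding adj_def by auto

lemma adj_dims[simp]: "dim_row (adj A) = dim_col A" "dim_col (adj A) = dim_row A"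
  unfolding adj_def by auto

lemma adj_index[simp]: "i < dim_col A \<Longrightarrow> j < dim_row A \<Longrightarrow> adj A $$ (i,j) = cnj (A $$ (j,i))"
  unfolding adj_def by auto

lemma adj_adj[simp]: "adj (adj A) = A"
  by (rule eq_matI) auto

lemma adj_mult: assumes "A \<in> carrier_mat a b" "B \<in> carrier_mat b c"
  shows "adj (A * B) = adj B * adj A"
proof (rule eq_matI)
  fix i j assume ij: "i < dim_row (adj B * adj A)" "j < dim_col (adj B * adj A)"
  then have i: "i < c" and j: "j < a" using assms by auto
  have "adj (A * B) $$ (i,j) = cnj (\<Sum>k<b. A $$ (j,k) * B $$ (k,i))"
    using assms i j by (simp add: scalar_prod_def row_def col_def atLeast0LessThan)
  also have "\<dots> = (\<Sum>k<b. cnj (B $$ (k,i)) * cnj (A $$ (j,k)))"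
    by (simp add: mult.commute)
  also have "\<dots> = (adj B * adj A) $$ (i,j)"
    using assms i j by (simp add: scalar_prod_def row_def col_def atLeast0LessThan)
  finally show "adj (A * B) $$ (i,j) = (adj B * adj A) $$ (i,j)" .
qed (use assms in auto)

lemma adj_one[simp]: "adj (1\<^sub>m n) = 1\<^sub>m n"
  by (rule eq_matI) auto

lemma ip_adj: assumes M: "M \<in> carrier_mat a b" and x: "x \<in> carrier_vec b" and y: "y \<in> carrier_vec a"
  shows "ip (M *\<^sub>v x) y = ip x (adj M *\<^sub>v y)"
proof -
  have "ip (M *\<^sub>v x) y = (\<Sum>i<a. (\<Sum>j<b. M $$ (i,j) * x $ j) * cnj (y $ i))"
    using assms unfolding ip_def by (simp add: scalar_prod_def row_def atLeast0LessThan)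
  also have "\<dots> = (\<Sum>i<a. \<Sum>j<b. x $ j * (M $$ (i,j) * cnj (y $ i)))"
    by (simp add: sum_distrib_left sum_distrib_right mult_ac)
  also have "\<dots> = (\<Sum>j<b. \<Sum>i<a. x $ j * (M $$ (i,j) * cnj (y $ i)))"
    by (rule sum.swap)
  also have "\<dots> = ip x (adj M *\<^sub>v y)"
    using assms unfolding ip_def by (simp add: scalar_prod_def row_def atLeast0LessThan sum_distrib_left)
  finally show ?thesis .
qed

lemma ip_add_left: "dim_vec x = dim_vec z \<Longrightarrow> dim_vec z = dim_vec y \<Longrightarrow> ip (x + z) y = ip x y + ip z y"
  unfolding ip_def by (simp add: distrib_right sum.distrib)

lemma ip_smult_left: "dim_vec x = dim_vec y \<Longrightarrow> ip (c \<cdot>\<^sub>v x) y = c * ip x y"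
  unfolding ip_def by (simp add: sum_distrib_left mult_ac)

lemma ip_cnj: "dim_vec x = dim_vec y \<Longrightarrow> ip y x = cnj (ip x y)"
  unfolding ip_def by (simp add: mult.commute)

lemma ip_self: "ip x x = of_real (\<Sum>i<dim_vec x. (cmod (x $ i))\<^sup>2)"
  unfolding ip_def of_real_sum by (rule sum.cong) (simp_all add: complex_norm_square[symmetric] of_real_power)

lemma ip_self_zero: assumes "ip x x = 0" shows "x = 0\<^sub>v (dim_vec x)"
proof (rule eq_vecI)
  fix i assume i: "i < dim_vec (0\<^sub>v (dim_vec x))"
  have "(\<Sum>i<dim_vec x. (cmod (x $ i))\<^sup>2) = 0" using assms ip_self[of x] by (simp only: of_real_eq_0_iff)
  then have "\<forall>i\<in>{..<dim_vec x}. (cmod (x $ i))\<^sup>2 = 0"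
    by (subst sum_nonneg_eq_0_iff[symmetric]) auto
  then show "x $ i = 0\<^sub>v (dim_vec x) $ i" using i by auto
qed auto



definition orthonormal :: "nat \<Rightarrow> complex vec list \<Rightarrow> bool" where
  "orthonormal m bs \<longleftrightarrow> set bs \<subseteq> carrier_vec m \<and>
     (\<forall>i<length bs. \<forall>j<length bs. ip (bs!i) (bs!j) = (if i = j then 1 else 0))"

lemma orth_carrier: "orthonormal m bs \<Longrightarrow> i < length bs \<Longrightarrow> bs ! i \<in> carrier_vec m"
  unfolding orthonormal_def by (meson nth_mem subsetD)

lemma orth_ip: "orthonormal m bs \<Longrightarrow> i < length bs \<Longrightarrow> j < length bs \<Longrightarrow> ip (bs!i) (bs!j) = (if i = j then 1 else 0)"
  unfolding orthonormal_def by blast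

lemma orth_adjB: assumes "orthonormal m bs"
  shows "adj (mat_of_cols m bs) * mat_of_cols m bs = 1\<^sub>m (length bs)"
proof (rule eq_matI)
  fix i j assume "i < dim_row (1\<^sub>m (length bs))" "j < dim_col (1\<^sub>m (length bs))"
  then have i: "i < length bs" and j: "j < length bs" by auto
  have dm: "dim_vec (bs ! i) = m" using orth_carrier[OF assms i] by auto
  have "(adj (mat_of_cols m bs) * mat_of_cols m bs) $$ (i,j) = (\<Sum>k<m. cnj (bs ! i $ k) * bs ! j $ k)"
    using i j by (simp add: scalar_prod_def row_def col_def atLeast0LessThan mat_of_cols_index)
  also have "\<dots> = ip (bs ! j) (bs ! i)" unfolding ip_def dm by (simp add: mult.commute)
  also have "\<dots> = 1\<^sub>m (length bs) $$ (i,j)" using assms i j unfolding orthonormal_def by auto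
  finally show "(adj (mat_of_cols m bs) * mat_of_cols m bs) $$ (i,j) = 1\<^sub>m (length bs) $$ (i,j)" .
qed auto

lemma adjB_vec: assumes "orthonormal m bs" "i < length bs" "r \<in> carrier_vec m"
  shows "(adj (mat_of_cols m bs) *\<^sub>v r) $ i = ip r (bs ! i)"
proof -
  have dm: "dim_vec (bs ! i) = m" using orth_carrier[OF assms(1,2)] by auto
  show ?thesis using assms(2,3) unfolding ip_def dm
    by (simp add: scalar_prod_def row_def atLeast0LessThan mat_of_cols_index mult.commute)
qed

lemma orth_length: assumes "orthonormal m bs" shows "length bs \<le> m"
proof -
  interpret vec_space "TYPE(complex)" m .
  let ?B = "mat_of_cols m bs"
  have B: "?B \<in> carrier_mat m (length bs)" by simp
  have cB: "cols ?B = bs" using assms unfolding orthonormal_def by auto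
  have dist: "distinct bs"
  proof -
    { fix i j assume ij: "i < length bs" "j < length bs" "i \<noteq> j" "bs ! i = bs ! j"
      have "ip (bs!i) (bs!j) = 0" using orth_ip[OF assms ij(1,2)] ij(3) by simp
      moreover have "ip (bs!j) (bs!j) = 1" using orth_ip[OF assms ij(2,2)] by simp
      ultimately have False using ij(4) by simp }
    then show ?thesis by (auto simp: distinct_conv_nth)
  qed
  have li: "\<not> lin_dep (set bs)"
  proof
    assume "lin_dep (set bs)"
    then obtain v where v: "v \<in> carrier_vec (length bs)" "v \<noteq> 0\<^sub>v (length bs)" "?B *\<^sub>v v = 0\<^sub>v m"
      using lin_depE[OF B] cB dist by metis
    have "v = (adj ?B * ?B) *\<^sub>v v" using orth_adjB[OF assms] v by simp
    also have "\<dots> = adj ?B *\<^sub>v (?B *\<^sub>v v)" using v B by (metis adj_carrier assoc_mult_mat_vec)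
    also have "\<dots> = 0\<^sub>v (length bs)" using v B by simp
    finally show False using v by simp
  qed
  have "card (set bs) \<le> dim"
    using li_le_dim(2)[OF fin_dim _ li] assms unfolding orthonormal_def by auto
  then show ?thesis using dim_is_n distinct_card[OF dist] by simp
qed

lemma subspace_matvec: assumes W: "is_subspace m W"
  shows "set bs \<subseteq> W \<Longrightarrow> y \<in> carrier_vec (length bs) \<Longrightarrow> mat_of_cols m bs *\<^sub>v y \<in> W"
proof (induction bs arbitrary: y)
  case Nil
  have "mat_of_cols m [] *\<^sub>v y = 0\<^sub>v m" by (rule eq_vecI) (use Nil.prems(2) in \<open>auto simp: scalar_prod_def\<close>)
  then show ?case using W unfolding is_subspace_def by auto
next
  case (Cons b bs)
  let ?y = "vec (length bs) (\<lambda>i. y $ Suc i)"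
  have bW: "b \<in> W" and bsW: "set bs \<subseteq> W" using Cons by auto
  have Wc: "W \<subseteq> carrier_vec m" using W unfolding is_subspace_def by auto
  have bc: "b \<in> carrier_vec m" using bW Wc by auto
  have bsc: "\<And>j. j < length bs \<Longrightarrow> bs ! j \<in> carrier_vec m" using bsW Wc by (meson nth_mem subsetD)
  have eq: "mat_of_cols m (b # bs) *\<^sub>v y = (y $ 0) \<cdot>\<^sub>v b + mat_of_cols m bs *\<^sub>v ?y"
  proof (rule eq_vecI)
    fix r assume r: "r < dim_vec ((y $ 0) \<cdot>\<^sub>v b + mat_of_cols m bs *\<^sub>v ?y)"
    then have rm: "r < m" using bc by auto
    have "(mat_of_cols m (b # bs) *\<^sub>v y) $ r = (\<Sum>j<Suc (length bs). (b # bs) ! j $ r * y $ j)"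
      using rm Cons.prems(2) by (simp add: scalar_prod_def row_def atLeast0LessThan mat_of_cols_index)
    also have "\<dots> = b $ r * y $ 0 + (\<Sum>j<length bs. bs ! j $ r * y $ Suc j)"
      by (subst sum.lessThan_Suc_shift) simp
    also have "\<dots> = ((y $ 0) \<cdot>\<^sub>v b + mat_of_cols m bs *\<^sub>v ?y) $ r"
      using rm bc by (simp add: scalar_prod_def row_def atLeast0LessThan mat_of_cols_index mult.commute)
    finally show "(mat_of_cols m (b # bs) *\<^sub>v y) $ r = ((y $ 0) \<cdot>\<^sub>v b + mat_of_cols m bs *\<^sub>v ?y) $ r" .
  qed (use bc in auto)
  have "mat_of_cols m bs *\<^sub>v ?y \<in> W" using Cons.IH[OF bsW] by simp
  moreover have "(y $ 0) \<cdot>\<^sub>v b \<in> W" using W bW unfolding is_subspace_def by auto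
  ultimately show ?case unfolding eq using W unfolding is_subspace_def by auto
qed



lemma subspace_carrier: "is_subspace m W \<Longrightarrow> W \<subseteq> carrier_vec m"
  unfolding is_subspace_def by auto

lemma subspace_add: "is_subspace m W \<Longrightarrow> v \<in> W \<Longrightarrow> w \<in> W \<Longrightarrow> v + w \<in> W"
  unfolding is_subspace_def by auto

lemma subspace_smult: "is_subspace m W \<Longrightarrow> v \<in> W \<Longrightarrow> c \<cdot>\<^sub>v v \<in> W"
  unfolding is_subspace_def by auto

lemma basis_lemma: assumes W: "is_subspace m W"
  shows "\<exists>bs. orthonormal m bs \<and> set bs \<subseteq> W \<and>
     (\<forall>w\<in>W. mat_of_cols m bs *\<^sub>v (adj (mat_of_cols m bs) *\<^sub>v w) = w)"
proof -
  let ?P = "\<lambda>bs. orthonormal m bs \<and> set bs \<subseteq> W"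
  have P0: "?P []" unfolding orthonormal_def by auto
  have "\<forall>bs. ?P bs \<longrightarrow> length bs < Suc m" using orth_length by (simp add: less_Suc_eq_le)
  then obtain bs where bs: "?P bs" and max: "\<forall>cs. ?P cs \<longrightarrow> length cs \<le> length bs"
    using ex_has_greatest_nat[of ?P "[]" length "Suc m", OF P0] by blast
  let ?B = "mat_of_cols m bs"
  let ?d = "length bs"
  have Wc: "W \<subseteq> carrier_vec m" using subspace_carrier[OF W] .
  have B: "?B \<in> carrier_mat m ?d" by simp
  have AB: "adj ?B * ?B = 1\<^sub>m ?d" using orth_adjB bs by blast
  have "\<forall>w\<in>W. ?B *\<^sub>v (adj ?B *\<^sub>v w) = w"
  proof
    fix w assume w: "w \<in> W"
    have wc: "w \<in> carrier_vec m" using w Wc by auto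
    define v where "v = ?B *\<^sub>v (adj ?B *\<^sub>v w)"
    define r where "r = w + (-1) \<cdot>\<^sub>v v"
    have aw: "adj ?B *\<^sub>v w \<in> carrier_vec ?d" using mult_mat_vec_carrier[OF adj_carrier[OF B] wc] .
    have vW: "v \<in> W" unfolding v_def
      by (rule subspace_matvec[OF W]) (use bs aw in simp_all)
    have vc: "v \<in> carrier_vec m" using vW Wc by auto
    have rW: "r \<in> W" unfolding r_def using W w vW by (simp add: subspace_add subspace_smult)
    have rc: "r \<in> carrier_vec m" using rW Wc by auto
    have "adj ?B *\<^sub>v v = (adj ?B * ?B) *\<^sub>v (adj ?B *\<^sub>v w)"
      unfolding v_def using B wc by (metis adj_carrier assoc_mult_mat_vec mult_mat_vec_carrier)
    also have "\<dots> = adj ?B *\<^sub>v w" using AB aw by simp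
    finally have Bv: "adj ?B *\<^sub>v v = adj ?B *\<^sub>v w" .
    have Br: "adj ?B *\<^sub>v r = 0\<^sub>v ?d"
    proof -
      have "adj ?B *\<^sub>v r = adj ?B *\<^sub>v w + adj ?B *\<^sub>v ((-1) \<cdot>\<^sub>v v)"
        unfolding r_def using B wc vc by (metis adj_carrier mult_add_distrib_mat_vec smult_carrier_vec)
      also have "\<dots> = adj ?B *\<^sub>v w + (-1) \<cdot>\<^sub>v (adj ?B *\<^sub>v w)"
        using B vc Bv by (metis adj_carrier mult_mat_vec)
      also have "\<dots> = 0\<^sub>v ?d" by (rule eq_vecI) simp_all
      finally show ?thesis .
    qed
    show "?B *\<^sub>v (adj ?B *\<^sub>v w) = w"
    proof (rule ccontr)
      assume ne: "?B *\<^sub>v (adj ?B *\<^sub>v w) \<noteq> w"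
      have rne: "r \<noteq> 0\<^sub>v m"
      proof
        assume r0: "r = 0\<^sub>v m"
        have "v = w"
        proof (rule eq_vecI)
          fix i assume i: "i < dim_vec w"
          then have "r $ i = 0" using r0 wc by simp
          then show "v $ i = w $ i" using i vc wc unfolding r_def by simp
        qed (use vc wc in auto)
        then show False using ne v_def by simp
      qed
      define s where "s = (\<Sum>i<dim_vec r. (cmod (r $ i))\<^sup>2)"
      have rr: "ip r r = of_real s" unfolding s_def by (rule ip_self)
      have s0: "s \<ge> 0" unfolding s_def by (auto intro: sum_nonneg)
      have sne: "s \<noteq> 0" using ip_self_zero[of r] rr rne rc by auto
      have spos: "s > 0" using s0 sne by simp
      define c where "c = complex_of_real (1 / sqrt s)"
      define b where "b = c \<cdot>\<^sub>v r"
      have bc: "b \<in> carrier_vec m" unfolding b_def using rc by simp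
      have bW: "b \<in> W" unfolding b_def using W rW by (simp add: subspace_smult)
      have cc: "cnj c = c" unfolding c_def by simp
      have bb: "ip b b = 1"
      proof -
        have "ip b b = c * ip r b" unfolding b_def using rc by (simp add: ip_smult_left)
        also have "ip r b = cnj (ip b r)" by (rule ip_cnj) (use rc bc in simp)
        also have "ip b r = c * ip r r" unfolding b_def using rc by (simp add: ip_smult_left)
        finally have "ip b b = c * c * of_real s" using cc rr by (simp add: mult.assoc)
        also have "\<dots> = 1"
        proof -
          have sq: "sqrt s * sqrt s = s" using spos by simp
          have e: "(1 / sqrt s) * (1 / sqrt s) * s = 1" using spos sq by (simp add: field_simps)
          have "c * c * of_real s = complex_of_real ((1 / sqrt s) * (1 / sqrt s) * s)"
            unfolding c_def by (simp only: of_real_mult)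
          then show ?thesis using e by simp
        qed
        finally show ?thesis .
      qed
      have bi: "\<And>i. i < ?d \<Longrightarrow> ip b (bs ! i) = 0 \<and> ip (bs ! i) b = 0"
      proof -
        fix i assume i: "i < ?d"
        have bic: "bs ! i \<in> carrier_vec m" using orth_carrier bs i by blast
        have "ip r (bs ! i) = 0" using adjB_vec[of m bs i r] bs i rc Br by simp
        then have "ip b (bs ! i) = 0" unfolding b_def using rc bic by (simp add: ip_smult_left)
        moreover then have "ip (bs ! i) b = 0" using ip_cnj[of b "bs ! i"] bc bic by simp
        ultimately show "ip b (bs ! i) = 0 \<and> ip (bs ! i) b = 0" by simp
      qed
      have "?P (bs @ [b])"
      proof -
        have "set (bs @ [b]) \<subseteq> carrier_vec m" using bs bc unfolding orthonormal_def by auto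
        moreover have "\<forall>i<length (bs @ [b]). \<forall>j<length (bs @ [b]).
           ip ((bs @ [b]) ! i) ((bs @ [b]) ! j) = (if i = j then 1 else 0)"
        proof (intro allI impI)
          fix i j assume i: "i < length (bs @ [b])" and j: "j < length (bs @ [b])"
          consider "i < ?d" "j < ?d" | "i < ?d" "j = ?d" | "i = ?d" "j < ?d" | "i = ?d" "j = ?d"
            using i j by fastforce
          then show "ip ((bs @ [b]) ! i) ((bs @ [b]) ! j) = (if i = j then 1 else 0)"
          proof cases
            case 1 then show ?thesis using orth_ip[OF conjunct1[OF bs]] by (simp add: nth_append)
          next
            case 2 then show ?thesis using bi by (simp add: nth_append)
          next
            case 3 then show ?thesis using bi by (simp add: nth_append)
          next
            case 4 then show ?thesis using bb by (simp add: nth_append)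
          qed
        qed
        ultimately show ?thesis unfolding orthonormal_def using bs bW by auto
      qed
      then have "length (bs @ [b]) \<le> ?d" using max by blast
      then show False by simp
    qed
  qed
  then show ?thesis using bs by blast
qed

lemma basis_mat: assumes W: "is_subspace m W" and ne: "W \<noteq> carrier_vec m"
  shows "\<exists>d B. d < m \<and> B \<in> carrier_mat m d \<and> adj B * B = 1\<^sub>m d \<and>
     (\<forall>y\<in>carrier_vec d. B *\<^sub>v y \<in> W) \<and> (\<forall>w\<in>W. B *\<^sub>v (adj B *\<^sub>v w) = w)"
proof -
  obtain bs where bs: "orthonormal m bs" "set bs \<subseteq> W"
    and proj: "\<forall>w\<in>W. mat_of_cols m bs *\<^sub>v (adj (mat_of_cols m bs) *\<^sub>v w) = w"
    using basis_lemma[OF W] by blast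
  let ?B = "mat_of_cols m bs"
  let ?d = "length bs"
  have B: "?B \<in> carrier_mat m ?d" by simp
  have AB: "adj ?B * ?B = 1\<^sub>m ?d" using orth_adjB bs by blast
  have le: "?d \<le> m" using orth_length bs by blast
  have inW: "\<forall>y\<in>carrier_vec ?d. ?B *\<^sub>v y \<in> W"
    using subspace_matvec[OF W bs(2)] by blast
  have "?d \<noteq> m"
  proof
    assume dm: "?d = m"
    have BA: "?B * adj ?B = 1\<^sub>m m"
      using mat_mult_left_right_inverse[of "adj ?B" m ?B] AB B dm by simp
    have "carrier_vec m \<subseteq> W"
    proof
      fix x :: "complex vec" assume x: "x \<in> carrier_vec m"
      have "x = (?B * adj ?B) *\<^sub>v x" using BA x by simp
      also have "\<dots> = ?B *\<^sub>v (adj ?B *\<^sub>v x)" using B x dm by (metis adj_carrier assoc_mult_mat_vec)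
      finally show "x \<in> W" using inW x B dm by (metis adj_carrier mult_mat_vec_carrier)
    qed
    then show False using ne subspace_carrier[OF W] by blast
  qed
  then show ?thesis using le B AB inW proj by (intro exI[of _ ?d] exI[of _ ?B]) auto
qed



lemma mat_unit_vec_index: "(A :: complex mat) \<in> carrier_mat a b \<Longrightarrow> i < a \<Longrightarrow> j < b \<Longrightarrow> (A *\<^sub>v unit_vec b j) $ i = A $$ (i,j)"
  by (simp add: scalar_prod_def row_def unit_vec_def sum.delta' atLeast0LessThan if_distrib cong: if_cong)

lemma mat_eq_vec: assumes "(A1 :: complex mat) \<in> carrier_mat a b" "A2 \<in> carrier_mat a b"
  and "\<And>y. y \<in> carrier_vec b \<Longrightarrow> A1 *\<^sub>v y = A2 *\<^sub>v y"
  shows "A1 = A2"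
proof (rule eq_matI)
  fix i j assume "i < dim_row A2" "j < dim_col A2"
  then have i: "i < a" and j: "j < b" using assms by auto
  show "A1 $$ (i,j) = A2 $$ (i,j)"
    using mat_unit_vec_index[OF assms(1) i j] mat_unit_vec_index[OF assms(2) i j]
      assms(3)[of "unit_vec b j"] by simp
qed (use assms in auto)

definition unitary_rep :: "('a, 'b) monoid_scheme \<Rightarrow> nat \<Rightarrow> ('a \<Rightarrow> complex mat) \<Rightarrow> bool" where
  "unitary_rep G m \<sigma> \<longleftrightarrow> is_rep G m \<sigma> \<and> (\<forall>g\<in>carrier G. adj (\<sigma> g) = \<sigma> (inv\<^bsub>G\<^esub> g))"

lemma subrep:
  assumes G: "group G" and U: "unitary_rep G m \<sigma>"
    and inv: "\<And>g w. g \<in> carrier G \<Longrightarrow> w \<in> W \<Longrightarrow> \<sigma> g *\<^sub>v w \<in> W"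
    and Bc: "B \<in> carrier_mat m d" and AB: "adj B * B = 1\<^sub>m d"
    and inW: "\<And>y. y \<in> carrier_vec d \<Longrightarrow> B *\<^sub>v y \<in> W"
    and proj: "\<And>w. w \<in> W \<Longrightarrow> B *\<^sub>v (adj B *\<^sub>v w) = w"
  shows "unitary_rep G d (\<lambda>g. adj B * \<sigma> g * B)"
    and "\<And>g. g \<in> carrier G \<Longrightarrow> \<sigma> g * B = B * (adj B * \<sigma> g * B)"
proof -
  interpret group G by (rule G)
  have sc: "\<And>g. g \<in> carrier G \<Longrightarrow> \<sigma> g \<in> carrier_mat m m"
    using U unfolding unitary_rep_def is_rep_def by auto
  have s1: "\<sigma> \<one>\<^bsub>G\<^esub> = 1\<^sub>m m" using U unfolding unitary_rep_def is_rep_def by auto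
  have smul: "\<And>g h. g \<in> carrier G \<Longrightarrow> h \<in> carrier G \<Longrightarrow> \<sigma> (g \<otimes>\<^bsub>G\<^esub> h) = \<sigma> g * \<sigma> h"
    using U unfolding unitary_rep_def is_rep_def by auto
  have sadj: "\<And>g. g \<in> carrier G \<Longrightarrow> adj (\<sigma> g) = \<sigma> (inv\<^bsub>G\<^esub> g)"
    using U unfolding unitary_rep_def by auto
  have aBc: "adj B \<in> carrier_mat d m" using Bc by simp
  let ?t = "\<lambda>g. adj B * \<sigma> g * B"
  have tc: "\<And>g. g \<in> carrier G \<Longrightarrow> ?t g \<in> carrier_mat d d"
    using aBc Bc sc by (meson mult_carrier_mat)
  have tv: "\<And>g (y :: complex vec). g \<in> carrier G \<Longrightarrow> y \<in> carrier_vec d \<Longrightarrow> ?t g *\<^sub>v y = adj B *\<^sub>v (\<sigma> g *\<^sub>v (B *\<^sub>v y))"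
  proof -
    fix g and y :: "complex vec" assume g: "g \<in> carrier G" and y: "y \<in> carrier_vec d"
    have "?t g *\<^sub>v y = (adj B * \<sigma> g) *\<^sub>v (B *\<^sub>v y)"
      using aBc sc[OF g] Bc y by (meson assoc_mult_mat_vec mult_carrier_mat)
    also have "\<dots> = adj B *\<^sub>v (\<sigma> g *\<^sub>v (B *\<^sub>v y))"
      using aBc sc[OF g] Bc y by (meson assoc_mult_mat_vec mult_mat_vec_carrier)
    finally show "?t g *\<^sub>v y = adj B *\<^sub>v (\<sigma> g *\<^sub>v (B *\<^sub>v y))" .
  qed
  have key: "\<And>g. g \<in> carrier G \<Longrightarrow> \<sigma> g * B = B * ?t g"
  proof -
    fix g assume g: "g \<in> carrier G"
    show "\<sigma> g * B = B * ?t g"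
    proof (rule mat_eq_vec)
      show "\<sigma> g * B \<in> carrier_mat m d" using sc[OF g] Bc by (meson mult_carrier_mat)
      show "B * ?t g \<in> carrier_mat m d" using tc[OF g] Bc by (meson mult_carrier_mat)
      fix y :: "complex vec" assume y: "y \<in> carrier_vec d"
      have By: "B *\<^sub>v y \<in> W" using inW[OF y] .
      have sBy: "\<sigma> g *\<^sub>v (B *\<^sub>v y) \<in> W" using inv[OF g By] .
      have "(B * ?t g) *\<^sub>v y = B *\<^sub>v (?t g *\<^sub>v y)" using Bc tc[OF g] y by (meson assoc_mult_mat_vec)
      also have "\<dots> = \<sigma> g *\<^sub>v (B *\<^sub>v y)" using tv[OF g y] proj[OF sBy] by simp
      also have "\<dots> = (\<sigma> g * B) *\<^sub>v y" using sc[OF g] Bc y by (metis assoc_mult_mat_vec)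
      finally show "(\<sigma> g * B) *\<^sub>v y = (B * ?t g) *\<^sub>v y" by simp
    qed
  qed
  then show "\<And>g. g \<in> carrier G \<Longrightarrow> \<sigma> g * B = B * ?t g" .
  have t1: "?t \<one>\<^bsub>G\<^esub> = 1\<^sub>m d" using s1 AB Bc aBc by simp
  have tmul: "\<And>g h. g \<in> carrier G \<Longrightarrow> h \<in> carrier G \<Longrightarrow> ?t (g \<otimes>\<^bsub>G\<^esub> h) = ?t g * ?t h"
  proof -
    fix g h assume g: "g \<in> carrier G" and h: "h \<in> carrier G"
    show "?t (g \<otimes>\<^bsub>G\<^esub> h) = ?t g * ?t h"
    proof (rule mat_eq_vec)
      show "?t (g \<otimes>\<^bsub>G\<^esub> h) \<in> carrier_mat d d" using tc g h by blast
      show "?t g * ?t h \<in> carrier_mat d d" using tc[OF g] tc[OF h] by (meson mult_carrier_mat)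
      fix y :: "complex vec" assume y: "y \<in> carrier_vec d"
      have By: "B *\<^sub>v y \<in> carrier_vec m" using Bc y by simp
      have sBy: "\<sigma> h *\<^sub>v (B *\<^sub>v y) \<in> W" using inv[OF h inW[OF y]] .
      have "?t (g \<otimes>\<^bsub>G\<^esub> h) *\<^sub>v y = adj B *\<^sub>v ((\<sigma> g * \<sigma> h) *\<^sub>v (B *\<^sub>v y))"
        using tv[OF m_closed[OF g h] y] smul[OF g h] by simp
      also have "\<dots> = adj B *\<^sub>v (\<sigma> g *\<^sub>v (\<sigma> h *\<^sub>v (B *\<^sub>v y)))"
        using sc[OF g] sc[OF h] By by simp
      also have "\<dots> = adj B *\<^sub>v (\<sigma> g *\<^sub>v (B *\<^sub>v (adj B *\<^sub>v (\<sigma> h *\<^sub>v (B *\<^sub>v y)))))"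
        using proj[OF sBy] by simp
      also have "\<dots> = ?t g *\<^sub>v (?t h *\<^sub>v y)"
        using tv[OF g] tv[OF h y] aBc sc[OF h] By by simp
      also have "\<dots> = (?t g * ?t h) *\<^sub>v y" using tc[OF g] tc[OF h] y by (metis assoc_mult_mat_vec)
      finally show "?t (g \<otimes>\<^bsub>G\<^esub> h) *\<^sub>v y = (?t g * ?t h) *\<^sub>v y" .
    qed
  qed
  have tadj: "\<And>g. g \<in> carrier G \<Longrightarrow> adj (?t g) = ?t (inv\<^bsub>G\<^esub> g)"
  proof -
    fix g assume g: "g \<in> carrier G"
    have "adj (?t g) = adj B * adj (adj B * \<sigma> g)"
      using adj_mult[OF _ Bc] aBc sc[OF g] by (meson mult_carrier_mat)
    also have "adj (adj B * \<sigma> g) = adj (\<sigma> g) * B"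
      using adj_mult[OF aBc sc[OF g]] by simp
    also have "adj B * (adj (\<sigma> g) * B) = ?t (inv\<^bsub>G\<^esub> g)"
      using assoc_mult_mat[OF aBc sc[OF inv_closed[OF g]] Bc] sadj[OF g] by simp
    finally show "adj (?t g) = ?t (inv\<^bsub>G\<^esub> g)" .
  qed
  show "unitary_rep G d ?t"
    unfolding unitary_rep_def is_rep_def using tc t1 tmul tadj by blast
qed



definition good :: "('a, 'b) monoid_scheme \<Rightarrow> 'a set \<Rightarrow> nat \<Rightarrow> ('a \<Rightarrow> complex mat) \<Rightarrow>
    nat \<Rightarrow> ('a \<Rightarrow> complex mat) \<Rightarrow> complex mat \<Rightarrow> bool" where
  "good G K n \<rho> m \<sigma> A \<longleftrightarrow> unitary_rep G m \<sigma> \<and> A \<in> carrier_mat n m \<and>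
     (\<exists>x\<in>carrier_vec m. A *\<^sub>v x \<noteq> 0\<^sub>v n) \<and> (\<forall>k\<in>K. A * \<sigma> k = \<rho> k * A)"

lemma shrink:
  assumes G: "group G" and gd: "good G K n \<rho> m \<sigma> A" and K: "K \<subseteq> carrier G"
    and \<rho>c: "\<And>k. k \<in> K \<Longrightarrow> \<rho> k \<in> carrier_mat n n"
    and inv: "\<And>g w. g \<in> carrier G \<Longrightarrow> w \<in> W \<Longrightarrow> \<sigma> g *\<^sub>v w \<in> W"
    and Bc: "B \<in> carrier_mat m d" and AB: "adj B * B = 1\<^sub>m d"
    and inW: "\<And>y. y \<in> carrier_vec d \<Longrightarrow> B *\<^sub>v y \<in> W"
    and proj: "\<And>w. w \<in> W \<Longrightarrow> B *\<^sub>v (adj B *\<^sub>v w) = w"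
    and w: "w \<in> W" and Aw: "A *\<^sub>v w \<noteq> 0\<^sub>v n"
  shows "good G K n \<rho> d (\<lambda>g. adj B * \<sigma> g * B) (A * B)"
proof -
  have U: "unitary_rep G m \<sigma>" and Ac: "A \<in> carrier_mat n m" and int: "\<And>k. k \<in> K \<Longrightarrow> A * \<sigma> k = \<rho> k * A"
    using gd unfolding good_def by auto
  have sr1: "unitary_rep G d (\<lambda>g. adj B * \<sigma> g * B)"
    using subrep(1)[of G m \<sigma> W B d] G U inv Bc AB inW proj by blast
  have sr2: "\<And>g. g \<in> carrier G \<Longrightarrow> \<sigma> g * B = B * (adj B * \<sigma> g * B)"
    using subrep(2)[of G m \<sigma> W B d] G U inv Bc AB inW proj by blast
  have sc: "\<And>g. g \<in> carrier G \<Longrightarrow> \<sigma> g \<in> carrier_mat m m"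
    using U unfolding unitary_rep_def is_rep_def by auto
  have aBc: "adj B \<in> carrier_mat d m" using Bc by simp
  have wc: "w \<in> carrier_vec m"
  proof (rule carrier_vecI)
    have "dim_vec (B *\<^sub>v (adj B *\<^sub>v w)) = m" using Bc by simp
    then show "dim_vec w = m" using proj[OF w] by simp
  qed
  have tc: "\<And>g. g \<in> carrier G \<Longrightarrow> adj B * \<sigma> g * B \<in> carrier_mat d d"
    using aBc Bc sc by (meson mult_carrier_mat)
  have ABc: "A * B \<in> carrier_mat n d" using Ac Bc by simp
  have nz: "\<exists>x\<in>carrier_vec d. (A * B) *\<^sub>v x \<noteq> 0\<^sub>v n"
  proof
    show "adj B *\<^sub>v w \<in> carrier_vec d" using aBc wc by simp
    have "(A * B) *\<^sub>v (adj B *\<^sub>v w) = A *\<^sub>v (B *\<^sub>v (adj B *\<^sub>v w))"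
      using Ac Bc aBc wc by (meson assoc_mult_mat_vec mult_mat_vec_carrier)
    then show "(A * B) *\<^sub>v (adj B *\<^sub>v w) \<noteq> 0\<^sub>v n" using proj[OF w] Aw by simp
  qed
  have it: "\<forall>k\<in>K. (A * B) * (adj B * \<sigma> k * B) = \<rho> k * (A * B)"
  proof
    fix k assume k: "k \<in> K"
    have kG: "k \<in> carrier G" using k K by auto
    have "(A * B) * (adj B * \<sigma> k * B) = A * (B * (adj B * \<sigma> k * B))"
      using Ac Bc tc[OF kG] by simp
    also have "\<dots> = A * (\<sigma> k * B)" by (simp only: sr2[OF kG])
    also have "\<dots> = (A * \<sigma> k) * B" using Ac sc[OF kG] Bc by simp
    also have "\<dots> = (\<rho> k * A) * B" using int[OF k] by simp
    also have "\<dots> = \<rho> k * (A * B)" using \<rho>c[OF k] Ac Bc by simp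
    finally show "(A * B) * (adj B * \<sigma> k * B) = \<rho> k * (A * B)" .
  qed
  show ?thesis unfolding good_def using sr1 ABc nz it by blast
qed

lemma good_pos: assumes "good G K n \<rho> m \<sigma> A" shows "m > 0"
proof (rule ccontr)
  assume "\<not> m > 0"
  then have m: "m = 0" by simp
  obtain x where x: "x \<in> carrier_vec m" "A *\<^sub>v x \<noteq> 0\<^sub>v n" and Ac: "A \<in> carrier_mat n m"
    using assms unfolding good_def by blast
  have "A *\<^sub>v x = 0\<^sub>v n" by (rule eq_vecI) (use x Ac m in \<open>auto simp: scalar_prod_def\<close>)
  then show False using x by simp
qed

lemma reduce:
  assumes G: "group G" and K: "K \<subseteq> carrier G"
    and \<rho>c: "\<And>k. k \<in> K \<Longrightarrow> \<rho> k \<in> carrier_mat n n"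
  shows "good G K n \<rho> m \<sigma> A \<Longrightarrow> \<exists>m' \<sigma>' A'. good G K n \<rho> m' \<sigma>' A' \<and> is_irred_rep G m' \<sigma>'"
proof (induction m arbitrary: \<sigma> A rule: less_induct)
  case (less m)
  show ?case
  proof (cases "is_irred_rep G m \<sigma>")
    case True then show ?thesis using less.prems by blast
  next
    case False
    have U: "unitary_rep G m \<sigma>" and Ac: "A \<in> carrier_mat n m"
      using less.prems unfolding good_def by auto
    have rep: "is_rep G m \<sigma>" using U unfolding unitary_rep_def by auto
    have sc: "\<And>g. g \<in> carrier G \<Longrightarrow> \<sigma> g \<in> carrier_mat m m"
      using rep unfolding is_rep_def by auto
    have sadj: "\<And>g. g \<in> carrier G \<Longrightarrow> adj (\<sigma> g) = \<sigma> (inv\<^bsub>G\<^esub> g)"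
      using U unfolding unitary_rep_def by auto
    have mpos: "m > 0" using good_pos[OF less.prems] .
    obtain W where W: "is_subspace m W" and inv: "\<And>g w. g \<in> carrier G \<Longrightarrow> w \<in> W \<Longrightarrow> \<sigma> g *\<^sub>v w \<in> W"
      and ne0: "W \<noteq> {0\<^sub>v m}" and neC: "W \<noteq> carrier_vec m"
    proof -
      have "\<not> (\<forall>W. is_subspace m W \<and> (\<forall>g \<in> carrier G. \<forall>w \<in> W. \<sigma> g *\<^sub>v w \<in> W)
          \<longrightarrow> W = {0\<^sub>v m} \<or> W = carrier_vec m)"
        using False rep mpos unfolding is_irred_rep_def by simp
      then show ?thesis using that by blast
    qed
    have Wc: "W \<subseteq> carrier_vec m" using subspace_carrier[OF W] .
    obtain d1 B1 where d1: "d1 < m" and B1c: "B1 \<in> carrier_mat m d1" and AB1: "adj B1 * B1 = 1\<^sub>m d1"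
      and inW1: "\<And>y. y \<in> carrier_vec d1 \<Longrightarrow> B1 *\<^sub>v y \<in> W"
      and proj1: "\<And>w. w \<in> W \<Longrightarrow> B1 *\<^sub>v (adj B1 *\<^sub>v w) = w"
      using basis_mat[OF W neC] by blast
    show ?thesis
    proof (cases "\<exists>w\<in>W. A *\<^sub>v w \<noteq> 0\<^sub>v n")
      case True
      then obtain w where w: "w \<in> W" "A *\<^sub>v w \<noteq> 0\<^sub>v n" by blast
      have "good G K n \<rho> d1 (\<lambda>g. adj B1 * \<sigma> g * B1) (A * B1)"
        by (rule shrink[OF G less.prems K \<rho>c inv B1c AB1 inW1 proj1 w])
      then show ?thesis using less.IH[OF d1] by blast
    next
      case False
      then have A0: "\<And>w. w \<in> W \<Longrightarrow> A *\<^sub>v w = 0\<^sub>v n" by blast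
      define W' where "W' = {x \<in> carrier_vec m. \<forall>w\<in>W. ip x w = 0}"
      have W'c: "W' \<subseteq> carrier_vec m" unfolding W'_def by auto
      have W': "is_subspace m W'"
        unfolding is_subspace_def
      proof (intro conjI ballI allI)
        show "W' \<subseteq> carrier_vec m" by (rule W'c)
        have "\<forall>w\<in>W. ip (0\<^sub>v m) w = 0"
        proof
          fix w assume "w \<in> W"
          then have "dim_vec w = m" using Wc by auto
          then show "ip (0\<^sub>v m) w = 0" unfolding ip_def by (intro sum.neutral) simp
        qed
        then show "0\<^sub>v m \<in> W'" unfolding W'_def by simp
        fix v w assume v: "v \<in> W'" and w: "w \<in> W'"
        show "v + w \<in> W'" using v w Wc unfolding W'_def by (auto simp: ip_add_left)
      next
        fix c v assume v: "v \<in> W'"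
        show "c \<cdot>\<^sub>v v \<in> W'" using v Wc unfolding W'_def by (auto simp: ip_smult_left)
      qed
      have inv': "\<And>g x. g \<in> carrier G \<Longrightarrow> x \<in> W' \<Longrightarrow> \<sigma> g *\<^sub>v x \<in> W'"
      proof -
        fix g x assume g: "g \<in> carrier G" and x: "x \<in> W'"
        have xc: "x \<in> carrier_vec m" using x W'c by auto
        have "\<forall>w\<in>W. ip (\<sigma> g *\<^sub>v x) w = 0"
        proof
          fix w assume w: "w \<in> W"
          have wc: "w \<in> carrier_vec m" using w Wc by auto
          have "ip (\<sigma> g *\<^sub>v x) w = ip x (adj (\<sigma> g) *\<^sub>v w)" using ip_adj[OF sc[OF g] xc wc] .
          also have "\<dots> = ip x (\<sigma> (inv\<^bsub>G\<^esub> g) *\<^sub>v w)" using sadj[OF g] by simp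
          also have "\<dots> = 0" using x inv[OF group.inv_closed[OF G g] w] unfolding W'_def by auto
          finally show "ip (\<sigma> g *\<^sub>v x) w = 0" .
        qed
        then show "\<sigma> g *\<^sub>v x \<in> W'" unfolding W'_def using sc[OF g] xc by auto
      qed
      have neC': "W' \<noteq> carrier_vec m"
      proof
        assume eq: "W' = carrier_vec m"
        obtain w where w: "w \<in> W" "w \<noteq> 0\<^sub>v m"
          using ne0 W unfolding is_subspace_def by blast
        have wc: "w \<in> carrier_vec m" using w Wc by auto
        then have "ip w w = 0" using eq w unfolding W'_def by auto
        then have "w = 0\<^sub>v (dim_vec w)" by (rule ip_self_zero)
        then show False using w wc by auto
      qed
      obtain d2 B2 where d2: "d2 < m" and B2c: "B2 \<in> carrier_mat m d2" and AB2: "adj B2 * B2 = 1\<^sub>m d2"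
        and inW2: "\<And>y. y \<in> carrier_vec d2 \<Longrightarrow> B2 *\<^sub>v y \<in> W'"
        and proj2: "\<And>w. w \<in> W' \<Longrightarrow> B2 *\<^sub>v (adj B2 *\<^sub>v w) = w"
        using basis_mat[OF W' neC'] by blast
      obtain x where x: "x \<in> carrier_vec m" "A *\<^sub>v x \<noteq> 0\<^sub>v n"
        using less.prems unfolding good_def by blast
      have aB1c: "adj B1 \<in> carrier_mat d1 m" using B1c by simp
      define p where "p = B1 *\<^sub>v (adj B1 *\<^sub>v x)"
      define q where "q = x + (-1) \<cdot>\<^sub>v p"
      have pW: "p \<in> W" unfolding p_def using inW1 aB1c x by simp
      have pc: "p \<in> carrier_vec m" using pW Wc by auto
      have qc: "q \<in> carrier_vec m" unfolding q_def using x pc by simp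
      have qW': "q \<in> W'"
      proof -
        have "\<forall>w\<in>W. ip q w = 0"
        proof
          fix w assume w: "w \<in> W"
          have wc: "w \<in> carrier_vec m" using w Wc by auto
          have "ip p w = ip (adj B1 *\<^sub>v x) (adj B1 *\<^sub>v w)"
            unfolding p_def using ip_adj[OF B1c _ wc] aB1c x by simp
          also have "\<dots> = ip x (B1 *\<^sub>v (adj B1 *\<^sub>v w))"
            using ip_adj[OF aB1c x(1)] aB1c wc by simp
          also have "\<dots> = ip x w" using proj1[OF w] by simp
          finally have pw: "ip p w = ip x w" .
          have "ip q w = ip x w + ip ((-1) \<cdot>\<^sub>v p) w"
            unfolding q_def using x pc wc by (simp add: ip_add_left)
          also have "\<dots> = ip x w + (-1) * ip p w" using pc wc by (simp add: ip_smult_left)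
          finally show "ip q w = 0" using pw by simp
        qed
        then show ?thesis unfolding W'_def using qc by auto
      qed
      have Aq: "A *\<^sub>v q \<noteq> 0\<^sub>v n"
      proof -
        have "A *\<^sub>v q = A *\<^sub>v x + A *\<^sub>v ((-1) \<cdot>\<^sub>v p)"
          unfolding q_def using Ac x pc by (simp add: mult_add_distrib_mat_vec)
        also have "A *\<^sub>v ((-1) \<cdot>\<^sub>v p) = (-1) \<cdot>\<^sub>v (A *\<^sub>v p)" using Ac pc by (simp add: mult_mat_vec)
        also have "A *\<^sub>v p = 0\<^sub>v n" using A0[OF pW] .
        finally have "A *\<^sub>v q = A *\<^sub>v x + (-1) \<cdot>\<^sub>v 0\<^sub>v n" .
        also have "\<dots> = A *\<^sub>v x" using Ac x by (intro eq_vecI) auto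
        finally show ?thesis using x by simp
      qed
      have "good G K n \<rho> d2 (\<lambda>g. adj B2 * \<sigma> g * B2) (A * B2)"
        by (rule shrink[OF G less.prems K \<rho>c inv' B2c AB2 inW2 proj2 qW' Aq])
      then show ?thesis using less.IH[OF d2] by blast
    qed
  qed
qed



lemma sum_single:
  assumes inj: "inj_on e {..<N}" and k0: "k0 < (N::nat)" and ek0: "e k0 = x"
  shows "(\<Sum>l<N. if e l = x then f l else 0) = (f k0 :: complex)"
proof -
  have "(\<Sum>l<N. if e l = x then f l else 0) = (\<Sum>l<N. if l = k0 then f l else 0)"
  proof (rule sum.cong)
    fix l assume l: "l \<in> {..<N}"
    have "e l = x \<longleftrightarrow> l = k0" using inj l k0 ek0 unfolding inj_on_def by auto
    then show "(if e l = x then f l else 0) = (if l = k0 then f l else 0)" by simp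
  qed simp
  also have "\<dots> = f k0" using k0 by (subst comm_monoid_add_class.sum.delta) auto
  finally show ?thesis .
qed

context group begin

lemma regular_good:
  assumes fin: "finite (carrier G)" and K: "subgroup K G"
    and rep: "is_rep (G\<lparr>carrier := K\<rparr>) n \<rho>" and npos: "n > 0"
  shows "\<exists>N P A. good G K n \<rho> N P A"
proof -
  define N where "N = card (carrier G)"
  obtain e where e: "bij_betw e {0..<N} (carrier G)"
    using ex_bij_betw_nat_finite[OF fin] unfolding N_def by blast
  have einj: "inj_on e {..<N}" using e unfolding bij_betw_def by (simp add: atLeast0LessThan)
  have ec: "\<And>i. i < N \<Longrightarrow> e i \<in> carrier G" using e unfolding bij_betw_def by auto
  have esurj: "\<And>x. x \<in> carrier G \<Longrightarrow> \<exists>i<N. e i = x"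
    using e unfolding bij_betw_def by (metis atLeastLessThan_iff imageE)
  have Kc: "K \<subseteq> carrier G" using K subgroup.subset by blast
  have \<rho>c: "\<And>k. k \<in> K \<Longrightarrow> \<rho> k \<in> carrier_mat n n" using rep unfolding is_rep_def by auto
  have \<rho>mul: "\<And>a b. a \<in> K \<Longrightarrow> b \<in> K \<Longrightarrow> \<rho> (a \<otimes> b) = \<rho> a * \<rho> b"
    using rep unfolding is_rep_def by auto
  have \<rho>1: "\<rho> \<one> = 1\<^sub>m n" using rep unfolding is_rep_def by auto
  define P where "P = (\<lambda>g. mat N N (\<lambda>(i,j). if e i = g \<otimes> e j then (1::complex) else 0))"
  have Pc: "\<And>g. P g \<in> carrier_mat N N" unfolding P_def by simp
  have Pidx: "\<And>g i j. i < N \<Longrightarrow> j < N \<Longrightarrow> P g $$ (i,j) = (if e i = g \<otimes> e j then 1 else 0)"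
    unfolding P_def by simp
  have P1: "P \<one> = 1\<^sub>m N"
  proof (rule eq_matI)
    fix i j assume "i < dim_row (1\<^sub>m N)" "j < dim_col (1\<^sub>m N)"
    then have i: "i < N" and j: "j < N" by auto
    have "e i = \<one> \<otimes> e j \<longleftrightarrow> i = j" using ec[OF j] einj i j unfolding inj_on_def by auto
    then show "P \<one> $$ (i,j) = 1\<^sub>m N $$ (i,j)" using Pidx i j by simp
  qed (auto simp: P_def)
  have Pmul: "\<And>g h. g \<in> carrier G \<Longrightarrow> h \<in> carrier G \<Longrightarrow> P (g \<otimes> h) = P g * P h"
  proof -
    fix g h assume g: "g \<in> carrier G" and h: "h \<in> carrier G"
    show "P (g \<otimes> h) = P g * P h"
    proof (rule eq_matI)
      fix i j assume "i < dim_row (P g * P h)" "j < dim_col (P g * P h)"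
      then have i: "i < N" and j: "j < N" using Pc[of g] Pc[of h] by auto
      obtain k0 where k0: "k0 < N" "e k0 = h \<otimes> e j" using esurj ec[OF j] h by blast
      have "(P g * P h) $$ (i,j) = (\<Sum>k<N. P g $$ (i,k) * P h $$ (k,j))"
        using i j Pc[of g] Pc[of h] by (simp add: scalar_prod_def row_def col_def atLeast0LessThan)
      also have "\<dots> = (\<Sum>k<N. if e k = h \<otimes> e j then (if e i = g \<otimes> e k then 1 else 0) else 0)"
        by (rule sum.cong) (simp_all add: Pidx i j)
      also have "\<dots> = (if e i = g \<otimes> e k0 then 1 else 0)"
        by (rule sum_single[OF einj k0])
      also have "\<dots> = P (g \<otimes> h) $$ (i,j)" using Pidx i j k0 g h ec[OF j] by (simp add: m_assoc)
      finally show "P (g \<otimes> h) $$ (i,j) = (P g * P h) $$ (i,j)" by simp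
    qed (use Pc[of g] Pc[of h] Pc[of "g \<otimes> h"] in auto)
  qed
  have Padj: "\<And>g. g \<in> carrier G \<Longrightarrow> adj (P g) = P (inv g)"
  proof -
    fix g assume g: "g \<in> carrier G"
    show "adj (P g) = P (inv g)"
    proof (rule eq_matI)
      fix i j assume "i < dim_row (P (inv g))" "j < dim_col (P (inv g))"
      then have i: "i < N" and j: "j < N" using Pc[of "inv g"] by auto
      have "e j = g \<otimes> e i \<longleftrightarrow> e i = inv g \<otimes> e j"
        using inv_solve_left[OF ec[OF i] g ec[OF j]] by auto
      then show "adj (P g) $$ (i,j) = P (inv g) $$ (i,j)" using Pidx i j Pc[of g] by simp
    qed (use Pc[of g] Pc[of "inv g"] in auto)
  qed
  have UP: "unitary_rep G N P"
    unfolding unitary_rep_def is_rep_def using Pc P1 Pmul Padj by blast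
  define u0 :: "complex vec" where "u0 = unit_vec n 0"
  have u0c: "u0 \<in> carrier_vec n" unfolding u0_def by simp
  define A where "A = mat n N (\<lambda>(r,j). if e j \<in> K then (\<rho> (e j) *\<^sub>v u0) $ r else 0)"
  have Ac: "A \<in> carrier_mat n N" unfolding A_def by simp
  have Aidx: "\<And>r j. r < n \<Longrightarrow> j < N \<Longrightarrow> A $$ (r,j) = (if e j \<in> K then (\<rho> (e j) *\<^sub>v u0) $ r else 0)"
    unfolding A_def by simp
  have int: "\<forall>k\<in>K. A * P k = \<rho> k * A"
  proof
    fix k assume k: "k \<in> K"
    have kG: "k \<in> carrier G" using k Kc by auto
    show "A * P k = \<rho> k * A"
    proof (rule eq_matI)
      fix r j assume "r < dim_row (\<rho> k * A)" "j < dim_col (\<rho> k * A)"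
      then have r: "r < n" and j: "j < N" using \<rho>c[OF k] Ac by auto
      obtain l0 where l0: "l0 < N" "e l0 = k \<otimes> e j" using esurj ec[OF j] kG by blast
      have "(A * P k) $$ (r,j) = (\<Sum>l<N. A $$ (r,l) * P k $$ (l,j))"
        using r j Pc[of k] Ac by (simp add: scalar_prod_def row_def col_def atLeast0LessThan)
      also have "\<dots> = (\<Sum>l<N. if e l = k \<otimes> e j then A $$ (r,l) else 0)"
        by (rule sum.cong) (simp_all add: Pidx j)
      also have "\<dots> = A $$ (r, l0)" by (rule sum_single[OF einj l0])
      finally have L: "(A * P k) $$ (r,j) = A $$ (r, l0)" .
      have R: "(\<rho> k * A) $$ (r,j) = (\<rho> k *\<^sub>v col A j) $ r"
        using r j \<rho>c[OF k] Ac by simp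
      show "(A * P k) $$ (r,j) = (\<rho> k * A) $$ (r,j)"
      proof (cases "e j \<in> K")
        case True
        have lK: "e l0 \<in> K" using l0(2) True k K by (simp add: subgroup.m_closed)
        have "col A j = \<rho> (e j) *\<^sub>v u0"
          by (rule eq_vecI) (use Aidx j True \<rho>c[OF True] Ac in simp_all)
        then have "(\<rho> k * A) $$ (r,j) = (\<rho> k *\<^sub>v (\<rho> (e j) *\<^sub>v u0)) $ r" using R by simp
        also have "\<dots> = ((\<rho> k * \<rho> (e j)) *\<^sub>v u0) $ r"
          using \<rho>c[OF k] \<rho>c[OF True] u0c by simp
        also have "\<dots> = (\<rho> (e l0) *\<^sub>v u0) $ r" using \<rho>mul[OF k True] l0(2) by simp
        also have "\<dots> = A $$ (r, l0)" using Aidx[OF r l0(1)] lK by simp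
        finally show ?thesis using L by simp
      next
        case False
        have lK: "e l0 \<notin> K"
        proof
          assume "e l0 \<in> K"
          then have "inv k \<otimes> e l0 \<in> K" using k K by (simp add: subgroup.m_closed subgroup.m_inv_closed)
          moreover have "inv k \<otimes> e l0 = e j" using l0(2) inv_solve_left[OF ec[OF j] kG ec[OF l0(1)]] by simp
          ultimately show False using False by simp
        qed
        have "col A j = 0\<^sub>v n"
          by (rule eq_vecI) (use Aidx j False Ac in simp_all)
        then have "(\<rho> k * A) $$ (r,j) = 0" using R \<rho>c[OF k] r by simp
        then show ?thesis using L Aidx[OF r l0(1)] lK by simp
      qed
    qed (use Ac Pc[of k] \<rho>c[OF k] in auto)
  qed
  obtain j1 where j1: "j1 < N" "e j1 = \<one>" using esurj by blast
  have nz: "\<exists>x\<in>carrier_vec N. A *\<^sub>v x \<noteq> 0\<^sub>v n"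
  proof
    show "unit_vec N j1 \<in> carrier_vec N" by simp
    have "(A *\<^sub>v unit_vec N j1) $ 0 = A $$ (0, j1)" by (rule mat_unit_vec_index[OF Ac npos j1(1)])
    also have "\<dots> = (\<rho> \<one> *\<^sub>v u0) $ 0" using Aidx[OF npos j1(1)] j1(2) K by (simp add: subgroup.one_closed)
    also have "\<dots> = 1" using \<rho>1 u0c npos unfolding u0_def by simp
    finally show "A *\<^sub>v unit_vec N j1 \<noteq> 0\<^sub>v n" using npos by auto
  qed
  have "good G K n \<rho> N P A" unfolding good_def using UP Ac nz int by blast
  then show ?thesis by blast
qed

end



definition avgm :: "'x set \<Rightarrow> ('x \<Rightarrow> complex mat) \<Rightarrow> nat \<Rightarrow> nat \<Rightarrow> complex mat" where
  "avgm S f a b = mat a b (\<lambda>(i,j). (\<Sum>s\<in>S. f s $$ (i,j)) / of_nat (card S))"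

lemma avgm_carrier[simp]: "avgm S f a b \<in> carrier_mat a b"
  unfolding avgm_def by simp

lemma avgm_mult_left:
  assumes C: "C \<in> carrier_mat p a" and f: "\<And>s. s \<in> S \<Longrightarrow> f s \<in> carrier_mat a b"
  shows "C * avgm S f a b = avgm S (\<lambda>s. C * f s) p b"
proof (rule eq_matI)
  fix i j assume "i < dim_row (avgm S (\<lambda>s. C * f s) p b)" "j < dim_col (avgm S (\<lambda>s. C * f s) p b)"
  then have i: "i < p" and j: "j < b" unfolding avgm_def by auto
  have "(C * avgm S f a b) $$ (i,j) = (\<Sum>k<a. C $$ (i,k) * ((\<Sum>s\<in>S. f s $$ (k,j)) / of_nat (card S)))"
    using i j C by (simp add: scalar_prod_def row_def col_def avgm_def atLeast0LessThan)
  also have "\<dots> = (\<Sum>k<a. \<Sum>s\<in>S. C $$ (i,k) * f s $$ (k,j)) / of_nat (card S)"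
    by (simp add: sum_distrib_left sum_divide_distrib)
  also have "\<dots> = (\<Sum>s\<in>S. \<Sum>k<a. C $$ (i,k) * f s $$ (k,j)) / of_nat (card S)"
    by (subst sum.swap) simp
  also have "\<dots> = (\<Sum>s\<in>S. (C * f s) $$ (i,j)) / of_nat (card S)"
  proof -
    have "\<And>s. s \<in> S \<Longrightarrow> (\<Sum>k<a. C $$ (i,k) * f s $$ (k,j)) = (C * f s) $$ (i,j)"
    proof -
      fix s assume s: "s \<in> S"
      have fs: "f s \<in> carrier_mat a b" using f[OF s] .
      show "(\<Sum>k<a. C $$ (i,k) * f s $$ (k,j)) = (C * f s) $$ (i,j)"
        using i j C fs by (simp add: scalar_prod_def row_def col_def atLeast0LessThan)
    qed
    then show ?thesis by simp
  qed
  also have "\<dots> = avgm S (\<lambda>s. C * f s) p b $$ (i,j)"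
    using i j unfolding avgm_def by simp
  finally show "(C * avgm S f a b) $$ (i,j) = avgm S (\<lambda>s. C * f s) p b $$ (i,j)" .
qed (use C in \<open>auto simp: avgm_def\<close>)

lemma avgm_mult_vec:
  assumes f: "\<And>s. s \<in> S \<Longrightarrow> f s \<in> carrier_mat a b" and y: "y \<in> carrier_vec b"
  shows "avgm S f a b *\<^sub>v y = vec a (\<lambda>i. (\<Sum>s\<in>S. (f s *\<^sub>v y) $ i) / of_nat (card S))"
proof (rule eq_vecI)
  fix i assume "i < dim_vec (vec a (\<lambda>i. (\<Sum>s\<in>S. (f s *\<^sub>v y) $ i) / of_nat (card S)))"
  then have i: "i < a" by simp
  have "(avgm S f a b *\<^sub>v y) $ i = (\<Sum>k<b. ((\<Sum>s\<in>S. f s $$ (i,k)) / of_nat (card S)) * y $ k)"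
    using i y by (simp add: scalar_prod_def row_def avgm_def atLeast0LessThan)
  also have "\<dots> = (\<Sum>k<b. \<Sum>s\<in>S. f s $$ (i,k) * y $ k) / of_nat (card S)"
    by (simp add: sum_distrib_right sum_divide_distrib)
  also have "\<dots> = (\<Sum>s\<in>S. \<Sum>k<b. f s $$ (i,k) * y $ k) / of_nat (card S)"
    by (subst sum.swap) simp
  also have "\<dots> = (\<Sum>s\<in>S. (f s *\<^sub>v y) $ i) / of_nat (card S)"
  proof -
    have "\<And>s. s \<in> S \<Longrightarrow> (\<Sum>k<b. f s $$ (i,k) * y $ k) = (f s *\<^sub>v y) $ i"
    proof -
      fix s assume s: "s \<in> S"
      have fs: "f s \<in> carrier_mat a b" using f[OF s] .
      show "(\<Sum>k<b. f s $$ (i,k) * y $ k) = (f s *\<^sub>v y) $ i"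
        using i y fs by (simp add: scalar_prod_def row_def atLeast0LessThan)
    qed
    then show ?thesis by simp
  qed
  finally show "(avgm S f a b *\<^sub>v y) $ i = vec a (\<lambda>i. (\<Sum>s\<in>S. (f s *\<^sub>v y) $ i) / of_nat (card S)) $ i"
    using i by simp
qed (simp add: avgm_def)

lemma avgm_cong: "(\<And>s. s \<in> S \<Longrightarrow> f s = g s) \<Longrightarrow> avgm S f a b = avgm S g a b"
  unfolding avgm_def by simp

lemma avgm_reindex:
  assumes "inj_on h S" "h ` S = S"
  shows "avgm S (\<lambda>s. f (h s)) a b = avgm S f a b"
proof -
  have "\<And>i j. (\<Sum>s\<in>S. f (h s) $$ (i,j)) = (\<Sum>s\<in>S. f s $$ (i,j))"
    using sum.reindex[OF assms(1), of "\<lambda>s. f s $$ (_,_)"] assms(2) by (simp add: comp_def)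
  then show ?thesis unfolding avgm_def by simp
qed

context group begin

lemma atom_exists:
  assumes fin: "finite (carrier G)"
  shows "subgroup M G \<Longrightarrow> H \<subset> M \<Longrightarrow> \<exists>L\<in>interval_atoms G H. L \<subseteq> M"
proof (induction "card M" arbitrary: M rule: less_induct)
  case less
  show ?case
  proof (cases "\<exists>M'. subgroup M' G \<and> H \<subset> M' \<and> M' \<subset> M")
    case True
    then obtain M' where M': "subgroup M' G" "H \<subset> M'" "M' \<subset> M" by blast
    have "finite M" using less.prems(1) fin subgroup.subset finite_subset by metis
    then have "card M' < card M" using M'(3) psubset_card_mono by blast
    then obtain L where "L \<in> interval_atoms G H" "L \<subseteq> M'" using less.hyps M'(1,2) by blast
    then show ?thesis using M'(3) by blast
  next
    case False
    then have "M \<in> interval_atoms G H" unfolding interval_atoms_def using less.prems by blast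
    then show ?thesis by blast
  qed
qed

end



context group begin

lemma final_step:
  assumes fin: "finite (carrier G)" and H: "subgroup H G" and K: "subgroup K G"
    and HK: "H \<subseteq> K" and atK: "\<And>L. L \<in> interval_atoms G H \<Longrightarrow> L \<subseteq> K"
    and irrK: "is_irred_rep (G\<lparr>carrier := K\<rparr>) n \<rho>"
    and stK: "pointwise_stab (G\<lparr>carrier := K\<rparr>) \<rho> (fixed_space n \<rho> H) = H"
    and gd: "good G K n \<rho> d \<sigma> A" and irr: "is_irred_rep G d \<sigma>"
  shows "pointwise_stab G \<sigma> (fixed_space d \<sigma> H) = H"
proof -
  have Kc: "K \<subseteq> carrier G" using K subgroup.subset by blast
  have Hc: "H \<subseteq> carrier G" using H subgroup.subset by blast
  have repK: "is_rep (G\<lparr>carrier := K\<rparr>) n \<rho>" using irrK unfolding is_irred_rep_def by auto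
  have \<rho>c: "\<And>k. k \<in> K \<Longrightarrow> \<rho> k \<in> carrier_mat n n" using repK unfolding is_rep_def by auto
  have U: "unitary_rep G d \<sigma>" and Ac: "A \<in> carrier_mat n d" and int: "\<And>k. k \<in> K \<Longrightarrow> A * \<sigma> k = \<rho> k * A"
    and nz: "\<exists>x\<in>carrier_vec d. A *\<^sub>v x \<noteq> 0\<^sub>v n" using gd unfolding good_def by auto
  have sc: "\<And>g. g \<in> carrier G \<Longrightarrow> \<sigma> g \<in> carrier_mat d d" and s1: "\<sigma> \<one> = 1\<^sub>m d"
    and smul: "\<And>g h. g \<in> carrier G \<Longrightarrow> h \<in> carrier G \<Longrightarrow> \<sigma> (g \<otimes> h) = \<sigma> g * \<sigma> h"
    using U unfolding unitary_rep_def is_rep_def by auto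
  define F where "F = fixed_space d \<sigma> H"
  define S where "S = pointwise_stab G \<sigma> F"
  have Fc: "F \<subseteq> carrier_vec d" unfolding F_def fixed_space_def by auto
  have HS: "H \<subseteq> S" unfolding S_def pointwise_stab_def F_def fixed_space_def using Hc by auto
  have Ssub: "subgroup S G"
  proof (rule subgroupI)
    show "S \<subseteq> carrier G" unfolding S_def pointwise_stab_def by auto
    show "S \<noteq> {}" using HS subgroup.one_closed[OF H] by auto
  next
    fix a assume a: "a \<in> S"
    have aG: "a \<in> carrier G" using a unfolding S_def pointwise_stab_def by auto
    have "\<forall>x\<in>F. \<sigma> (inv a) *\<^sub>v x = x"
    proof
      fix x assume x: "x \<in> F"
      have xc: "x \<in> carrier_vec d" using x Fc by auto
      have ax: "\<sigma> a *\<^sub>v x = x" using a x unfolding S_def pointwise_stab_def by auto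
      have "\<sigma> (inv a) *\<^sub>v x = \<sigma> (inv a) *\<^sub>v (\<sigma> a *\<^sub>v x)" using ax by simp
      also have "\<dots> = (\<sigma> (inv a) * \<sigma> a) *\<^sub>v x" using sc[OF inv_closed[OF aG]] sc[OF aG] xc by simp
      also have "\<dots> = \<sigma> (inv a \<otimes> a) *\<^sub>v x" using smul[OF inv_closed[OF aG] aG] by simp
      also have "\<dots> = x" using l_inv[OF aG] s1 xc by simp
      finally show "\<sigma> (inv a) *\<^sub>v x = x" .
    qed
    then show "inv a \<in> S" unfolding S_def pointwise_stab_def using inv_closed[OF aG] by auto
  next
    fix a b assume a: "a \<in> S" and b: "b \<in> S"
    have aG: "a \<in> carrier G" using a unfolding S_def pointwise_stab_def by auto
    have bG: "b \<in> carrier G" using b unfolding S_def pointwise_stab_def by auto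
    have "\<forall>x\<in>F. \<sigma> (a \<otimes> b) *\<^sub>v x = x"
    proof
      fix x assume x: "x \<in> F"
      have xc: "x \<in> carrier_vec d" using x Fc by auto
      have ax: "\<sigma> a *\<^sub>v x = x" and bx: "\<sigma> b *\<^sub>v x = x" using a b x unfolding S_def pointwise_stab_def by auto
      have "\<sigma> (a \<otimes> b) *\<^sub>v x = \<sigma> a *\<^sub>v (\<sigma> b *\<^sub>v x)" using smul[OF aG bG] sc[OF aG] sc[OF bG] xc by simp
      then show "\<sigma> (a \<otimes> b) *\<^sub>v x = x" using ax bx by simp
    qed
    then show "a \<otimes> b \<in> S" unfolding S_def pointwise_stab_def using m_closed[OF aG bG] by auto
  qed
  show ?thesis
  proof (rule ccontr)
    assume ne: "pointwise_stab G \<sigma> (fixed_space d \<sigma> H) \<noteq> H"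
    then have HsS: "H \<subset> S" using HS unfolding S_def F_def by auto
    obtain L where L: "L \<in> interval_atoms G H" "L \<subseteq> S" using atom_exists[OF fin Ssub HsS] by blast
    have HL: "H \<subset> L" using L(1) unfolding interval_atoms_def by auto
    then obtain l where l: "l \<in> L" "l \<notin> H" by blast
    have lK: "l \<in> K" using atK[OF L(1)] l by auto
    have lG: "l \<in> carrier G" using lK Kc by auto
    have lS: "l \<in> S" using L(2) l by auto
    have "l \<notin> pointwise_stab (G\<lparr>carrier := K\<rparr>) \<rho> (fixed_space n \<rho> H)" using stK l(2) by simp
    then obtain u where u: "u \<in> fixed_space n \<rho> H" and lu: "\<rho> l *\<^sub>v u \<noteq> u"
      using lK unfolding pointwise_stab_def by auto
    have uc: "u \<in> carrier_vec n" using u unfolding fixed_space_def by auto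
    have uH: "\<And>h. h \<in> H \<Longrightarrow> \<rho> h *\<^sub>v u = u" using u unfolding fixed_space_def by auto
    define Im where "Im = {A *\<^sub>v y | y. y \<in> carrier_vec d}"
    have Imsub: "is_subspace n Im"
      unfolding is_subspace_def
    proof (intro conjI ballI allI)
      show "Im \<subseteq> carrier_vec n" unfolding Im_def using Ac by auto
      have "A *\<^sub>v 0\<^sub>v d = 0\<^sub>v n" using Ac by simp
      moreover have "0\<^sub>v d \<in> carrier_vec d" by simp
      ultimately show "0\<^sub>v n \<in> Im" unfolding Im_def by (metis (mono_tags, lifting) mem_Collect_eq)
      fix v w assume v: "v \<in> Im" and w: "w \<in> Im"
      then obtain y1 y2 where y: "y1 \<in> carrier_vec d" "y2 \<in> carrier_vec d" "v = A *\<^sub>v y1" "w = A *\<^sub>v y2"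
        unfolding Im_def by auto
      have "v + w = A *\<^sub>v (y1 + y2)" using y Ac by (simp add: mult_add_distrib_mat_vec)
      then show "v + w \<in> Im" unfolding Im_def using y by auto
    next
      fix c v assume v: "v \<in> Im"
      then obtain y1 where y: "y1 \<in> carrier_vec d" "v = A *\<^sub>v y1" unfolding Im_def by auto
      have "c \<cdot>\<^sub>v v = A *\<^sub>v (c \<cdot>\<^sub>v y1)" using y Ac by (simp add: mult_mat_vec)
      then show "c \<cdot>\<^sub>v v \<in> Im" unfolding Im_def using y by auto
    qed
    have Iminv: "\<forall>k\<in>carrier (G\<lparr>carrier := K\<rparr>). \<forall>w\<in>Im. \<rho> k *\<^sub>v w \<in> Im"
    proof (intro ballI)
      fix k w assume k: "k \<in> carrier (G\<lparr>carrier := K\<rparr>)" and w: "w \<in> Im"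
      have kK: "k \<in> K" using k by simp
      have kG: "k \<in> carrier G" using kK Kc by auto
      obtain y where y: "y \<in> carrier_vec d" "w = A *\<^sub>v y" using w unfolding Im_def by auto
      have "\<rho> k *\<^sub>v w = (\<rho> k * A) *\<^sub>v y" using y \<rho>c[OF kK] Ac by simp
      also have "\<dots> = (A * \<sigma> k) *\<^sub>v y" using int[OF kK] by simp
      also have "\<dots> = A *\<^sub>v (\<sigma> k *\<^sub>v y)" using Ac sc[OF kG] y by simp
      finally have "\<rho> k *\<^sub>v w = A *\<^sub>v (\<sigma> k *\<^sub>v y)" .
      moreover have "\<sigma> k *\<^sub>v y \<in> carrier_vec d" using sc[OF kG] y by simp
      ultimately show "\<rho> k *\<^sub>v w \<in> Im" unfolding Im_def by blast
    qed
    have "Im = {0\<^sub>v n} \<or> Im = carrier_vec n" using irrK Imsub Iminv unfolding is_irred_rep_def by blast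
    moreover have "Im \<noteq> {0\<^sub>v n}" using nz unfolding Im_def by auto
    ultimately have ImC: "Im = carrier_vec n" by blast
    have "u \<in> Im" using uc ImC by simp
    then obtain y where y: "y \<in> carrier_vec d" "A *\<^sub>v y = u" unfolding Im_def by blast
    define M where "M = avgm H \<sigma> d d"
    define x where "x = M *\<^sub>v y"
    have Hfin: "finite H" using fin Hc finite_subset by auto
    have Hne: "card H > 0" using Hfin subgroup.one_closed[OF H] card_gt_0_iff by auto
    have \<sigma>H: "\<And>h. h \<in> H \<Longrightarrow> \<sigma> h \<in> carrier_mat d d" using sc Hc by auto
    have xc: "x \<in> carrier_vec d" unfolding x_def M_def using mult_mat_vec_carrier[OF avgm_carrier[of H \<sigma> d d] y(1)] .
    have xF: "x \<in> F"
    proof -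
      have "\<forall>h'\<in>H. \<sigma> h' *\<^sub>v x = x"
      proof
        fix h' assume h': "h' \<in> H"
        have h'G: "h' \<in> carrier G" using h' Hc by auto
        have "\<sigma> h' * M = avgm H (\<lambda>h. \<sigma> h' * \<sigma> h) d d"
          unfolding M_def by (rule avgm_mult_left[OF sc[OF h'G] \<sigma>H])
        also have "\<dots> = avgm H (\<lambda>h. \<sigma> (h' \<otimes> h)) d d"
          by (rule avgm_cong) (use smul h'G Hc in auto)
        also have "\<dots> = avgm H \<sigma> d d"
        proof (rule avgm_reindex)
          show "inj_on (\<lambda>h. h' \<otimes> h) H" unfolding inj_on_def using h'G Hc by (metis Units_eq Units_l_cancel subsetD)
          show "(\<lambda>h. h' \<otimes> h) ` H = H"
          proof
            show "(\<lambda>h. h' \<otimes> h) ` H \<subseteq> H" using h' H by (auto simp: subgroup.m_closed)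
            show "H \<subseteq> (\<lambda>h. h' \<otimes> h) ` H"
            proof
              fix h assume h: "h \<in> H"
              have "inv h' \<otimes> h \<in> H" using h h' H by (simp add: subgroup.m_closed subgroup.m_inv_closed)
              moreover have "h' \<otimes> (inv h' \<otimes> h) = h"
              proof -
                have hG: "h \<in> carrier G" using h Hc by auto
                show ?thesis by (metis hG h'G inv_closed l_one m_assoc r_inv)
              qed
              ultimately show "h \<in> (\<lambda>h. h' \<otimes> h) ` H" by force
            qed
          qed
        qed
        finally have eq: "\<sigma> h' * M = M" unfolding M_def .
        have "\<sigma> h' *\<^sub>v x = (\<sigma> h' * M) *\<^sub>v y" unfolding x_def M_def
          using assoc_mult_mat_vec[OF sc[OF h'G] avgm_carrier[of H \<sigma> d d] y(1)] by simp
        then show "\<sigma> h' *\<^sub>v x = x" using eq unfolding x_def by simp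
      qed
      then show ?thesis unfolding F_def fixed_space_def using xc by auto
    qed
    have Ax: "A *\<^sub>v x = u"
    proof -
      have "A *\<^sub>v x = (A * M) *\<^sub>v y" unfolding x_def M_def
        using assoc_mult_mat_vec[OF Ac avgm_carrier[of H \<sigma> d d] y(1)] by simp
      also have "A * M = avgm H (\<lambda>h. A * \<sigma> h) n d" unfolding M_def by (rule avgm_mult_left[OF Ac \<sigma>H])
      also have "\<dots> = avgm H (\<lambda>h. \<rho> h * A) n d" by (rule avgm_cong) (use int HK in auto)
      also have "avgm H (\<lambda>h. \<rho> h * A) n d *\<^sub>v y = vec n (\<lambda>i. (\<Sum>h\<in>H. ((\<rho> h * A) *\<^sub>v y) $ i) / of_nat (card H))"
      proof (rule avgm_mult_vec)
        fix h assume h: "h \<in> H"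
        then have "\<rho> h \<in> carrier_mat n n" using \<rho>c HK by auto
        then show "\<rho> h * A \<in> carrier_mat n d" using Ac by simp
      qed (rule y(1))
      also have "\<dots> = vec n (\<lambda>i. (\<Sum>h\<in>H. u $ i) / of_nat (card H))"
      proof -
        have "\<And>h. h \<in> H \<Longrightarrow> (\<rho> h * A) *\<^sub>v y = u"
        proof -
          fix h assume h: "h \<in> H"
          have "(\<rho> h * A) *\<^sub>v y = \<rho> h *\<^sub>v (A *\<^sub>v y)" using \<rho>c[of h] h HK Ac y by auto
          then show "(\<rho> h * A) *\<^sub>v y = u" using y(2) uH[OF h] by simp
        qed
        then show ?thesis by simp
      qed
      also have "\<dots> = u" using uc Hne by (intro eq_vecI) auto
      finally show ?thesis .
    qed
    have lx: "\<sigma> l *\<^sub>v x = x" using lS xF unfolding S_def pointwise_stab_def by auto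
    have "A *\<^sub>v (\<sigma> l *\<^sub>v x) = (A * \<sigma> l) *\<^sub>v x" using Ac sc[OF lG] xc by simp
    also have "\<dots> = (\<rho> l * A) *\<^sub>v x" using int[OF lK] by simp
    also have "\<dots> = \<rho> l *\<^sub>v u" using \<rho>c[OF lK] Ac xc Ax by simp
    finally have "\<rho> l *\<^sub>v u = u" using lx Ax by simp
    then show False using lu by simp
  qed
qed

end



theorem lemma3p12:
  fixes G :: "('a, 'b) monoid_scheme" and H :: "'a set"
  assumes "group G" and "finite (carrier G)" and "subgroup H G"
    and "lin_primitive (G\<lparr>carrier := bottom_top G H\<rparr>) H"
  shows "lin_primitive G H"
proof -
  interpret group G by (rule assms(1))
  define K where "K = bottom_top G H"
  have Hc: "H \<subseteq> carrier G" using assms(3) subgroup.subset by blast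
  have atc: "\<And>L. L \<in> interval_atoms G H \<Longrightarrow> L \<subseteq> carrier G"
  proof -
    fix L assume "L \<in> interval_atoms G H"
    then have "subgroup L G" unfolding interval_atoms_def by simp
    then show "L \<subseteq> carrier G" by (rule subgroup.subset)
  qed
  have genc: "H \<union> \<Union>(interval_atoms G H) \<subseteq> carrier G" using Hc atc by blast
  have Ksub: "subgroup K G" unfolding K_def bottom_top_def by (rule generate_is_subgroup[OF genc])
  have Kc: "K \<subseteq> carrier G" using Ksub subgroup.subset by blast
  have HK: "H \<subseteq> K"
  proof
    fix h assume h: "h \<in> H"
    show "h \<in> K" unfolding K_def bottom_top_def by (rule generate.incl) (use h in simp)
  qed
  have atK: "\<And>L. L \<in> interval_atoms G H \<Longrightarrow> L \<subseteq> K"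
  proof
    fix L x assume L: "L \<in> interval_atoms G H" and x: "x \<in> L"
    show "x \<in> K" unfolding K_def bottom_top_def by (rule generate.incl) (use L x in blast)
  qed
  obtain n \<rho> where irrK: "is_irred_rep (G\<lparr>carrier := K\<rparr>) n \<rho>"
    and stK: "pointwise_stab (G\<lparr>carrier := K\<rparr>) \<rho> (fixed_space n \<rho> H) = H"
    using assms(4) unfolding lin_primitive_def K_def by blast
  have repK: "is_rep (G\<lparr>carrier := K\<rparr>) n \<rho>" and npos: "n > 0"
    using irrK unfolding is_irred_rep_def by auto
  have \<rho>c: "\<And>k. k \<in> K \<Longrightarrow> \<rho> k \<in> carrier_mat n n" using repK unfolding is_rep_def by auto
  obtain N P A where gd: "good G K n \<rho> N P A"
    using regular_good[OF assms(2) Ksub repK npos] by blast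
  obtain d \<sigma> A' where gd': "good G K n \<rho> d \<sigma> A'" and irr: "is_irred_rep G d \<sigma>"
    using reduce[OF assms(1) Kc \<rho>c gd] by blast
  have "pointwise_stab G \<sigma> (fixed_space d \<sigma> H) = H"
    by (rule final_step[OF assms(2) assms(3) Ksub HK atK irrK stK gd' irr])
  then show ?thesis unfolding lin_primitive_def using irr by blast
qed


end
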